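(* Let $A$ be a finite set and $v:2^A\to\mathbb{R}_{\ge0}$ a monotone subadditive function with $v(\emptyset)=0$. Let $S_1,\dots,S_N$ enumerate all subsets of $A$ ($N=2^{|A|}$). For each $S\subseteq A$ define $\tilde v(S)$ to be the optimal value of the linear program $$\min \sum_{j=1}^N \alpha_j\, v(S_j)\quad\text{s.t.}\quad \alpha_j\ge 0\ (1\le j\le N),\qquad \sum_{j:\, i\in S_j}\alpha_j\ge 1\ \ \forall i\in S.$$ Then $\tilde v(\cdot)$ is an XOS (fractionally subadditive) function.
   Context: A function $w:2^A\to\mathbb{R}_{\ge 0}$ is XOS (equivalently fractionally subadditive) if for every $S\subseteq A$ and every family of weights $0\le x(T)\le 1$ ($T\subseteq A$) with $\sum_{T:\, i\in T}x(T)\ge 1$ for all $i\in S$, we have $w(S)\le\sum_{T\subseteq A}x(T)\,w(T)$; equivalently, $w$ is the pointwise maximum of finitely many nonnegative additive functions. *)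

theory Defs
  imports Complex_Main
begin

definition xos :: "'a set \<Rightarrow> ('a set \<Rightarrow> real) \<Rightarrow> bool" where
  "xos A w \<longleftrightarrow>
     (\<forall>S. S \<subseteq> A \<longrightarrow> w S \<ge> 0) \<and>
     (\<forall>S x. S \<subseteq> A \<longrightarrow>
        (\<forall>T. T \<subseteq> A \<longrightarrow> 0 \<le> x T \<and> x T \<le> 1) \<longrightarrow>
        (\<forall>i\<in>S. (\<Sum>T\<in>{T. T \<subseteq> A \<and> i \<in> T}. x T) \<ge> 1) \<longrightarrow>
        w S \<le> (\<Sum>T\<in>Pow A. x T * w T))"

definition lp_value :: "'a set \<Rightarrow> ('a set \<Rightarrow> real) \<Rightarrow> 'a set \<Rightarrow> real" where
  "lp_value A v S = Inf {(\<Sum>T\<in>Pow A. \<alpha> T * v T) | \<alpha>.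
      (\<forall>T\<in>Pow A. \<alpha> T \<ge> 0) \<and>
      (\<forall>i\<in>S. (\<Sum>T\<in>{T. T \<subseteq> A \<and> i \<in> T}. \<alpha> T) \<ge> 1)}"

end

theory Submission
  imports Defs
begin

definition feas :: "'a set \<Rightarrow> 'a set \<Rightarrow> ('a set \<Rightarrow> real) \<Rightarrow> bool" where
  "feas A S \<alpha> \<longleftrightarrow> (\<forall>T\<in>Pow A. \<alpha> T \<ge> 0) \<and>
      (\<forall>i\<in>S. (\<Sum>T\<in>{T. T \<subseteq> A \<and> i \<in> T}. \<alpha> T) \<ge> 1)"

lemma lp_eq: "lp_value A v S = Inf {(\<Sum>T\<in>Pow A. \<alpha> T * v T) | \<alpha>. feas A S \<alpha>}"
  unfolding lp_value_def feas_def by simp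

lemma feas_ne:
  assumes "finite A" "S \<subseteq> A"
  shows "feas A S (\<lambda>_. 1)"
  unfolding feas_def
proof (intro conjI ballI)
  fix i assume "i \<in> S"
  then have "{i} \<in> {T. T \<subseteq> A \<and> i \<in> T}" using assms by auto
  moreover have "finite {T. T \<subseteq> A \<and> i \<in> T}" using assms(1) by auto
  ultimately have "card {T. T \<subseteq> A \<and> i \<in> T} \<ge> 1"
    by (metis One_nat_def Suc_leI card_gt_0_iff empty_iff)
  then show "(\<Sum>T\<in>{T. T \<subseteq> A \<and> i \<in> T}. (1::real)) \<ge> 1" by simp
qed simp

lemma bdd:
  assumes "\<forall>S. S \<subseteq> A \<longrightarrow> v S \<ge> 0"
  shows "bdd_below {(\<Sum>T\<in>Pow A. \<alpha> T * v T) | \<alpha>. feas A S \<alpha>}"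
  unfolding bdd_below_def
proof (intro exI[of _ 0] ballI)
  fix y assume "y \<in> {(\<Sum>T\<in>Pow A. \<alpha> T * v T) | \<alpha>. feas A S \<alpha>}"
  then obtain \<alpha> where "feas A S \<alpha>" "y = (\<Sum>T\<in>Pow A. \<alpha> T * v T)" by auto
  then show "0 \<le> y" using assms unfolding feas_def
    by (auto intro!: sum_nonneg)
qed

theorem lemma3p4:
  fixes A :: "'a set" and v :: "'a set \<Rightarrow> real"
  assumes "finite A"
    and "\<forall>S. S \<subseteq> A \<longrightarrow> v S \<ge> 0"
    and "v {} = 0"
    and "\<forall>S T. S \<subseteq> T \<and> T \<subseteq> A \<longrightarrow> v S \<le> v T"
    and "\<forall>S T. S \<subseteq> A \<and> T \<subseteq> A \<longrightarrow> v (S \<union> T) \<le> v S + v T"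
  shows "xos A (lp_value A v)"
proof -
  let ?F = "\<lambda>S. {(\<Sum>T\<in>Pow A. \<alpha> T * v T) | \<alpha>. feas A S \<alpha>}"
  have ne: "?F S \<noteq> {}" if "S \<subseteq> A" for S
    using feas_ne[OF assms(1) that] by blast
  have bd: "bdd_below (?F S)" for S using bdd[OF assms(2)] .
  have lower: "lp_value A v S \<le> (\<Sum>T\<in>Pow A. \<alpha> T * v T)" if "feas A S \<alpha>" for S \<alpha>
    unfolding lp_eq using that by (intro cInf_lower[OF _ bd]) auto
  have nonneg: "lp_value A v S \<ge> 0" if "S \<subseteq> A" for S
    unfolding lp_eq
  proof (rule cInf_greatest[OF ne[OF that]])
    fix y assume "y \<in> ?F S"
    then obtain \<alpha> where "feas A S \<alpha>" "y = (\<Sum>T\<in>Pow A. \<alpha> T * v T)" by auto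
    then show "0 \<le> y" using assms(2) unfolding feas_def
      by (auto intro!: sum_nonneg)
  qed
  have fin: "finite (Pow A)" using assms(1) by simp
  have main: "lp_value A v S \<le> (\<Sum>T\<in>Pow A. x T * lp_value A v T)"
    if S: "S \<subseteq> A" and x01: "\<forall>T. T \<subseteq> A \<longrightarrow> 0 \<le> x T \<and> x T \<le> 1"
      and cov: "\<forall>i\<in>S. (\<Sum>T\<in>{T. T \<subseteq> A \<and> i \<in> T}. x T) \<ge> 1" for S x
  proof (rule field_le_epsilon)
    fix e :: real assume e: "0 < e"
    define X where "X = (\<Sum>T\<in>Pow A. x T)"
    have X0: "X \<ge> 0" unfolding X_def using x01 by (auto intro!: sum_nonneg)
    define d where "d = e / (X + 1)"
    have d0: "d > 0" unfolding d_def using e X0 by simp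
    have "\<forall>T\<in>Pow A. \<exists>\<alpha>. feas A T \<alpha> \<and> (\<Sum>U\<in>Pow A. \<alpha> U * v U) < lp_value A v T + d"
    proof
      fix T assume T: "T \<in> Pow A"
      have "Inf (?F T) < lp_value A v T + d" unfolding lp_eq using d0 by simp
      from cInf_lessD[OF ne this] T show "\<exists>\<alpha>. feas A T \<alpha> \<and> (\<Sum>U\<in>Pow A. \<alpha> U * v U) < lp_value A v T + d"
        by auto
    qed
    then obtain a where a: "\<And>T. T \<in> Pow A \<Longrightarrow> feas A T (a T) \<and> (\<Sum>U\<in>Pow A. a T U * v U) < lp_value A v T + d"
      by metis
    define \<beta> where "\<beta> U = (\<Sum>T\<in>Pow A. x T * a T U)" for U
    have "feas A S \<beta>"
      unfolding feas_def
    proof (intro conjI ballI)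
      fix U assume "U \<in> Pow A"
      then show "0 \<le> \<beta> U" unfolding \<beta>_def using a x01 unfolding feas_def
        by (auto intro!: sum_nonneg)
    next
      fix i assume i: "i \<in> S"
      let ?C = "{T. T \<subseteq> A \<and> i \<in> T}"
      have Csub: "?C \<subseteq> Pow A" by auto
      have e1: "(\<Sum>U\<in>?C. \<beta> U) = (\<Sum>T\<in>Pow A. x T * (\<Sum>U\<in>?C. a T U))"
        unfolding \<beta>_def by (simp add: sum.swap[of _ _ "Pow A"] sum_distrib_left)
      have e2: "(\<Sum>T\<in>Pow A. x T * (\<Sum>U\<in>?C. a T U)) \<ge> (\<Sum>T\<in>?C. x T * (\<Sum>U\<in>?C. a T U))"
      proof (rule sum_mono2[OF fin Csub])
        fix T assume "T \<in> Pow A - ?C"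
        then have "T \<in> Pow A" by auto
        then have "feas A T (a T)" using a by blast
        then have "(\<Sum>U\<in>?C. a T U) \<ge> 0" unfolding feas_def by (auto intro!: sum_nonneg)
        then show "0 \<le> x T * (\<Sum>U\<in>?C. a T U)" using x01 \<open>T \<in> Pow A\<close> by auto
      qed
      have e3: "(\<Sum>T\<in>?C. x T * (\<Sum>U\<in>?C. a T U)) \<ge> (\<Sum>T\<in>?C. x T)"
      proof (rule sum_mono)
        fix T assume T: "T \<in> ?C"
        then have "feas A T (a T)" using a by blast
        then have "(\<Sum>U\<in>?C. a T U) \<ge> 1" using T unfolding feas_def by auto
        moreover have "x T \<ge> 0" using x01 T by auto
        ultimately show "x T \<le> x T * (\<Sum>U\<in>?C. a T U)"
          by (metis mult.right_neutral mult_left_mono)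
      qed
      show "1 \<le> (\<Sum>U\<in>?C. \<beta> U)" using e1 e2 e3 cov[rule_format, OF i] by linarith
    qed
    then have "lp_value A v S \<le> (\<Sum>U\<in>Pow A. \<beta> U * v U)" by (rule lower)
    also have "\<dots> = (\<Sum>T\<in>Pow A. x T * (\<Sum>U\<in>Pow A. a T U * v U))"
    proof -
      have "(\<Sum>U\<in>Pow A. \<beta> U * v U) = (\<Sum>U\<in>Pow A. \<Sum>T\<in>Pow A. x T * (a T U * v U))"
        unfolding \<beta>_def sum_distrib_right by (simp add: mult.assoc)
      also have "\<dots> = (\<Sum>T\<in>Pow A. \<Sum>U\<in>Pow A. x T * (a T U * v U))"
        by (rule sum.swap)
      also have "\<dots> = (\<Sum>T\<in>Pow A. x T * (\<Sum>U\<in>Pow A. a T U * v U))"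
        by (simp add: sum_distrib_left)
      finally show ?thesis .
    qed
    also have "\<dots> \<le> (\<Sum>T\<in>Pow A. x T * (lp_value A v T + d))"
    proof (rule sum_mono)
      fix T assume T: "T \<in> Pow A"
      then show "x T * (\<Sum>U\<in>Pow A. a T U * v U) \<le> x T * (lp_value A v T + d)"
        using a[OF T] x01 by (auto intro!: mult_left_mono)
    qed
    also have "\<dots> = (\<Sum>T\<in>Pow A. x T * lp_value A v T) + d * X"
      unfolding X_def by (simp add: distrib_left sum.distrib sum_distrib_left[symmetric] mult.commute[of _ d])
    also have "d * X \<le> e"
    proof -
      have "d * X = e * (X / (X + 1))" unfolding d_def using X0 by (simp add: field_simps)
      also have "\<dots> \<le> e * 1" using X0 e by (intro mult_left_mono) auto
      finally show ?thesis by simp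
    qed
    finally show "lp_value A v S \<le> (\<Sum>T\<in>Pow A. x T * lp_value A v T) + e" by simp
  qed
  show ?thesis unfolding xos_def using nonneg main by blast
qed

end
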